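(* Let $G=(V,E)$ be an undirected, unweighted, 2-edge-connected graph and let $T$ be a spanning tree of $G$. Then for every edge $e$ of $T$ there exists a set $C\subseteq S_e$ with $|C|\le 6$ such that for every swap edge $f\in S_e$, $C$ contains an edge that is critical for $f$.
   Context: $d_T(u,v)$ denotes the number of edges on the unique path between $u$ and $v$ in the tree $T$. For an edge $e$ of $T$, let $X$ and $Y=V\setminus X$ be the vertex sets of the two connected components of $T-e$. The set $S_e$ of swap edges of $e$ consists of all edges of $E\setminus\{e\}$ with one endpoint in $X$ and the other in $Y$; each swap edge is written $(u,v)$ with $u\in X$, $v\in Y$. For $f=(x,y)\in S_e$, let $T_{e/f}$ be the tree obtained from $T$ by replacing $e$ with $f$; for $g=(a,b)\in S_e$ one has $d_{T_{e/f}}(a,b)=d_T(x,a)+1+d_T(b,y)$. An edge $g=(a,b)\in S_e$ is called critical for $f=(x,y)\in S_e$ if $$d_T(x,a)+1+d_T(b,y)=\max_{(a'',b'')\in S_e}\big(d_T(x,a'')+1+d_T(b'',y)\big),$$ i.e. $g$ attains the maximum stretch of $T_{e/f}$ over the swap edges of $e$. *)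

theory Defs
  imports Main
begin

definition graph :: "'a set \<Rightarrow> 'a set set \<Rightarrow> bool" where
  "graph V E \<longleftrightarrow> finite V \<and> (\<forall>e\<in>E. \<exists>u v. e = {u, v} \<and> u \<noteq> v \<and> u \<in> V \<and> v \<in> V)"

definition walk :: "'a set set \<Rightarrow> 'a list \<Rightarrow> bool" where
  "walk E xs \<longleftrightarrow> xs \<noteq> [] \<and> (\<forall>i. Suc i < length xs \<longrightarrow> {xs ! i, xs ! Suc i} \<in> E)"

definition reachable :: "'a set set \<Rightarrow> 'a \<Rightarrow> 'a \<Rightarrow> bool" where
  "reachable E u v \<longleftrightarrow> (\<exists>xs. walk E xs \<and> hd xs = u \<and> last xs = v)"

definition connected_graph :: "'a set \<Rightarrow> 'a set set \<Rightarrow> bool" where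
  "connected_graph V E \<longleftrightarrow> (\<forall>u\<in>V. \<forall>v\<in>V. reachable E u v)"

definition two_edge_connected :: "'a set \<Rightarrow> 'a set set \<Rightarrow> bool" where
  "two_edge_connected V E \<longleftrightarrow> connected_graph V E \<and> (\<forall>e\<in>E. connected_graph V (E - {e}))"

definition spanning_tree :: "'a set \<Rightarrow> 'a set set \<Rightarrow> 'a set set \<Rightarrow> bool" where
  "spanning_tree V E T \<longleftrightarrow> T \<subseteq> E \<and> connected_graph V T \<and>
     (\<forall>e\<in>T. \<not> connected_graph V (T - {e}))"

definition dist :: "'a set set \<Rightarrow> 'a \<Rightarrow> 'a \<Rightarrow> nat" where
  "dist E u v = (LEAST n. \<exists>xs. walk E xs \<and> hd xs = u \<and> last xs = v \<and> length xs = Suc n)"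

text \<open>For the tree edge e = {p,q}: X is the vertex set of the component of T - e containing p,
  Y = V - X.  Swap edges are recorded as oriented pairs (u,v) with u in X and v in Y.\<close>

definition side :: "'a set \<Rightarrow> 'a set set \<Rightarrow> 'a \<Rightarrow> 'a \<Rightarrow> 'a set" where
  "side V T p q = {v\<in>V. reachable (T - {{p, q}}) p v}"

definition swap_edges :: "'a set \<Rightarrow> 'a set set \<Rightarrow> 'a set set \<Rightarrow> 'a \<Rightarrow> 'a \<Rightarrow> ('a \<times> 'a) set" where
  "swap_edges V E T p q = {(u, v). u \<in> side V T p q \<and> v \<in> V - side V T p q \<and>
       {u, v} \<in> E - {{p, q}}}"

definition critical :: "'a set \<Rightarrow> 'a set set \<Rightarrow> 'a set set \<Rightarrow> 'a \<Rightarrow> 'a \<Rightarrow> 'a \<times> 'a \<Rightarrow> 'a \<times> 'a \<Rightarrow> bool" where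
  "critical V E T p q g f \<longleftrightarrow>
     (case f of (x, y) \<Rightarrow> case g of (a, b) \<Rightarrow>
        dist T x a + 1 + dist T b y =
        Max ((\<lambda>(a'', b''). dist T x a'' + 1 + dist T b'' y) ` swap_edges V E T p q))"

end

theory Submission
  imports Defs
begin


lemma walk_Nil[simp]: "\<not> walk E []" by (simp add: walk_def)
lemma walk_single[simp]: "walk E [x]" by (simp add: walk_def)

lemma walk_Cons2: "walk E (x # y # xs) \<longleftrightarrow> {x,y} \<in> E \<and> walk E (y # xs)"
proof
  assume w: "walk E (x # y # xs)"
  have "{x,y} \<in> E" using w unfolding walk_def by (auto dest!: spec[of _ 0])
  moreover have "walk E (y # xs)"
    unfolding walk_def
  proof (intro conjI allI impI)
    fix i assume "Suc i < length (y # xs)"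
    then have "Suc (Suc i) < length (x # y # xs)" by simp
    then show "{(y # xs) ! i, (y # xs) ! Suc i} \<in> E" using w unfolding walk_def
      by (metis nth_Cons_Suc)
  qed simp
  ultimately show "{x,y} \<in> E \<and> walk E (y # xs)" by simp
next
  assume h: "{x,y} \<in> E \<and> walk E (y # xs)"
  show "walk E (x # y # xs)"
    unfolding walk_def
  proof (intro conjI allI impI)
    fix i assume i: "Suc i < length (x # y # xs)"
    show "{(x # y # xs) ! i, (x # y # xs) ! Suc i} \<in> E"
    proof (cases i)
      case 0 then show ?thesis using h by simp
    next
      case (Suc j)
      then have "Suc j < length (y # xs)" using i by simp
      then show ?thesis using h Suc unfolding walk_def by simp
    qed
  qed simp
qed

lemma walk_ConsD: "walk E (x # xs) \<Longrightarrow> xs \<noteq> [] \<Longrightarrow> walk E xs"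
  by (cases xs) (auto simp: walk_Cons2)

lemma walk_append:
  assumes "walk E xs" "walk E ys" "last xs = hd ys"
  shows "walk E (xs @ tl ys)"
  using assms
proof (induction xs)
  case Nil then show ?case by simp
next
  case (Cons x xs)
  show ?case
  proof (cases xs)
    case Nil
    then show ?thesis using Cons.prems by (cases ys) auto
  next
    case (Cons y zs)
    then have "walk E (xs @ tl ys)" using Cons.IH Cons.prems walk_ConsD by fastforce
    then show ?thesis using Cons.prems \<open>xs = y # zs\<close> by (simp add: walk_Cons2)
  qed
qed

lemma walk_snoc: "walk E xs \<Longrightarrow> {last xs, y} \<in> E \<Longrightarrow> walk E (xs @ [y])"
  using walk_append[of E xs "[last xs, y]"] by (simp add: walk_Cons2)

lemma walk_rev: "walk E xs \<Longrightarrow> walk E (rev xs)"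
proof (induction xs)
  case Nil then show ?case by simp
next
  case (Cons x xs)
  show ?case
  proof (cases xs)
    case Nil then show ?thesis by simp
  next
    case (Cons y zs)
    then have w: "walk E (rev xs)" using Cons.IH Cons.prems walk_ConsD by fastforce
    have "{y, x} \<in> E" using Cons.prems \<open>xs = y # zs\<close> by (simp add: walk_Cons2 insert_commute)
    moreover have "last (rev xs) = y" using \<open>xs = y # zs\<close> by simp
    ultimately show ?thesis using walk_snoc[OF w] by simp
  qed
qed

lemma walk_take: "walk E xs \<Longrightarrow> 0 < n \<Longrightarrow> walk E (take n xs)"
  unfolding walk_def by auto

lemma walk_drop: "walk E xs \<Longrightarrow> n < length xs \<Longrightarrow> walk E (drop n xs)"
  unfolding walk_def by auto

lemma walk_edge: "walk E xs \<Longrightarrow> Suc i < length xs \<Longrightarrow> {xs ! i, xs ! Suc i} \<in> E"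
  unfolding walk_def by auto

lemma reachable_refl[simp]: "reachable E u u"
  unfolding reachable_def by (rule exI[of _ "[u]"]) simp

lemma reachable_sym: "reachable E u v \<Longrightarrow> reachable E v u"
  unfolding reachable_def
  by (metis walk_rev hd_rev last_rev)

lemma reachable_trans: "reachable E u v \<Longrightarrow> reachable E v w \<Longrightarrow> reachable E u w"
  unfolding reachable_def
proof (elim exE conjE)
  fix xs ys assume a: "walk E xs" "hd xs = u" "last xs = v" "walk E ys" "hd ys = v" "last ys = w"
  have "walk E (xs @ tl ys)" using a walk_append by metis
  moreover have "hd (xs @ tl ys) = u" using a by (cases xs) auto
  moreover have "last (xs @ tl ys) = w"
    using a by (cases ys) (auto simp: last_append)
  ultimately show "\<exists>xs. walk E xs \<and> hd xs = u \<and> last xs = w" by blast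
qed

lemma reachable_step: "reachable E u a \<Longrightarrow> {a,b} \<in> E \<Longrightarrow> reachable E u b"
  by (rule reachable_trans[of _ _ a]) (auto simp: reachable_def walk_Cons2 intro!: exI[of _ "[a,b]"])

lemma dist_le:
  assumes "walk E xs" "hd xs = u" "last xs = v"
  shows "dist E u v + 1 \<le> length xs"
proof -
  obtain n where n: "length xs = Suc n" using assms(1) by (cases xs) auto
  have "dist E u v \<le> n" unfolding dist_def
    by (rule Least_le) (use assms n in blast)
  then show ?thesis using n by simp
qed

lemma dist_ex:
  assumes "reachable E u v"
  shows "\<exists>xs. walk E xs \<and> hd xs = u \<and> last xs = v \<and> length xs = Suc (dist E u v)"
proof -
  obtain xs where xs: "walk E xs" "hd xs = u" "last xs = v" using assms unfolding reachable_def by blast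
  obtain n where n: "length xs = Suc n" using xs(1) by (cases xs) auto
  have "\<exists>n xs. walk E xs \<and> hd xs = u \<and> last xs = v \<and> length xs = Suc n" using xs n by blast
  then show ?thesis unfolding dist_def by (rule LeastI_ex)
qed



locale tree =
  fixes V :: "'a set" and E T :: "'a set set"
  assumes gr: "graph V E" and st: "spanning_tree V E T"
begin

abbreviation d where "d \<equiv> dist T"

lemma edgeT: "{u,v} \<in> T \<Longrightarrow> u \<noteq> v \<and> u \<in> V \<and> v \<in> V"
proof -
  assume "{u,v} \<in> T"
  then have "{u,v} \<in> E" using st unfolding spanning_tree_def by blast
  then obtain a b where "{u,v} = {a,b}" "a \<noteq> b" "a \<in> V" "b \<in> V" using gr unfolding graph_def by blast
  then show ?thesis by (auto simp: doubleton_eq_iff)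
qed

lemma conn: "connected_graph V T" using st unfolding spanning_tree_def by blast

lemma reach: "u \<in> V \<Longrightarrow> v \<in> V \<Longrightarrow> reachable T u v"
  using conn unfolding connected_graph_def by blast

lemma d_refl[simp]: "d u u = 0"
  using dist_le[of T "[u]" u u] by simp

lemma d_eq0: "u \<in> V \<Longrightarrow> v \<in> V \<Longrightarrow> d u v = 0 \<Longrightarrow> u = v"
proof -
  assume a: "u \<in> V" "v \<in> V" "d u v = 0"
  obtain xs where xs: "walk T xs" "hd xs = u" "last xs = v" "length xs = Suc (d u v)"
    using dist_ex[OF reach[OF a(1,2)]] by blast
  then obtain x where "xs = [x]" using a(3) by (cases xs) auto
  then show ?thesis using xs by simp
qed

lemma d_sym: "u \<in> V \<Longrightarrow> v \<in> V \<Longrightarrow> d u v = d v u"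
proof -
  have le: "d b a \<le> d a b" if ab: "a \<in> V" "b \<in> V" for a b
  proof -
    obtain xs where xs: "walk T xs" "hd xs = a" "last xs = b" "length xs = Suc (d a b)"
      using dist_ex[OF reach[OF ab]] by blast
    have "d b a + 1 \<le> length (rev xs)"
      by (rule dist_le) (use xs walk_rev in \<open>auto simp: hd_rev last_rev\<close>)
    then show ?thesis using xs by simp
  qed
  assume "u \<in> V" "v \<in> V" then show ?thesis using le by (meson antisym)
qed

lemma d_tri: "u \<in> V \<Longrightarrow> v \<in> V \<Longrightarrow> w \<in> V \<Longrightarrow> d u w \<le> d u v + d v w"
proof -
  assume a: "u \<in> V" "v \<in> V" "w \<in> V"
  obtain xs where xs: "walk T xs" "hd xs = u" "last xs = v" "length xs = Suc (d u v)"
    using dist_ex[OF reach[OF a(1,2)]] by blast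
  obtain ys where ys: "walk T ys" "hd ys = v" "last ys = w" "length ys = Suc (d v w)"
    using dist_ex[OF reach[OF a(2,3)]] by blast
  have "d u w + 1 \<le> length (xs @ tl ys)"
  proof (rule dist_le)
    show "walk T (xs @ tl ys)" using walk_append xs ys by metis
    show "hd (xs @ tl ys) = u" using xs by (cases xs) auto
    show "last (xs @ tl ys) = w" using ys xs by (cases ys) (auto simp: last_append)
  qed
  then show ?thesis using xs ys by simp
qed

lemma d_one_edge: "d u v = 1 \<Longrightarrow> u \<in> V \<Longrightarrow> v \<in> V \<Longrightarrow> {u,v} \<in> T"
proof -
  assume a: "d u v = 1" "u \<in> V" "v \<in> V"
  obtain xs where xs: "walk T xs" "hd xs = u" "last xs = v" "length xs = Suc (d u v)"
    using dist_ex[OF reach[OF a(2,3)]] by blast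
  then obtain x y where "xs = [x,y]" using a(1) by (cases xs; cases "tl xs") auto
  then show ?thesis using xs by (simp add: walk_Cons2)
qed

lemma d_edge: "{u,v} \<in> T \<Longrightarrow> d u v = 1"
proof -
  assume e: "{u,v} \<in> T"
  have "d u v + 1 \<le> length [u,v]" by (rule dist_le) (use e in \<open>auto simp: walk_Cons2\<close>)
  moreover have "d u v \<noteq> 0" using d_eq0 edgeT[OF e] by blast
  ultimately show ?thesis by simp
qed

lemma nbr:
  assumes "u \<in> V" "s \<in> V" "u \<noteq> s"
  shows "\<exists>v\<in>V. d u v = 1 \<and> d u s = d v s + 1"
proof -
  obtain xs where xs: "walk T xs" "hd xs = u" "last xs = s" "length xs = Suc (d u s)"
    using dist_ex[OF reach[OF assms(1,2)]] by blast
  have "d u s \<noteq> 0" using assms d_eq0 by blast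
  then obtain v rest where xs2: "xs = u # v # rest" using xs by (cases xs; cases "tl xs") auto
  have e: "{u,v} \<in> T" using xs(1) xs2 by (simp add: walk_Cons2)
  have "d v s + 1 \<le> length (v # rest)"
    by (rule dist_le) (use xs xs2 walk_ConsD[of T u "v # rest"] in auto)
  then have "d v s + 1 \<le> d u s" using xs xs2 by simp
  moreover have "d u s \<le> d u v + d v s" using d_tri assms edgeT[OF e] by blast
  ultimately show ?thesis using d_edge[OF e] edgeT[OF e] by (intro bexI[of _ v]) auto
qed

end


context tree begin

lemma walk_reach_all:
  assumes w: "walk T xs" and h: "reachable T' u (hd xs)"
    and step: "\<And>a b. {a,b} \<in> T \<Longrightarrow> reachable T' u a \<Longrightarrow> reachable T' u b"
  shows "\<forall>k<length xs. reachable T' u (xs ! k)"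
proof (intro allI impI)
  fix k assume "k < length xs"
  then show "reachable T' u (xs ! k)"
  proof (induction k)
    case 0 then show ?case using h w by (cases xs) auto
  next
    case (Suc k)
    then have "{xs ! k, xs ! Suc k} \<in> T" using walk_edge[OF w] by blast
    then show ?case using Suc step by auto
  qed
qed

lemma cut:
  assumes e: "{u,v} \<in> T"
  shows "\<exists>A \<subseteq> V. u \<in> A \<and> v \<notin> A \<and> (\<forall>a\<in>A. \<forall>b\<in>V-A. d a b = d a u + 1 + d v b)"
proof -
  define T' where "T' = T - {{u,v}}"
  define A where "A = {w\<in>V. reachable T' u w}"
  have uV: "u \<in> V" and vV: "v \<in> V" and uv: "u \<noteq> v" using edgeT[OF e] by auto
  have uA: "u \<in> A" using uV unfolding A_def by simp
  have vA: "v \<notin> A"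
  proof
    assume "v \<in> A"
    then have ruv: "reachable T' u v" unfolding A_def by simp
    have step: "reachable T' u b" if "{a,b} \<in> T" "reachable T' u a" for a b
    proof (cases "{a,b} = {u,v}")
      case True
      then have "b = u \<or> b = v" by (auto simp: doubleton_eq_iff)
      then show ?thesis using ruv by auto
    next
      case False
      then have "{a,b} \<in> T'" using that unfolding T'_def by simp
      then show ?thesis using reachable_step that by metis
    qed
    have all: "reachable T' u w" if wV: "w \<in> V" for w
    proof -
      obtain xs where xs: "walk T xs" "hd xs = u" "last xs = w" using reach[OF uV wV] unfolding reachable_def by blast
      have "\<forall>k<length xs. reachable T' u (xs ! k)"
        by (rule walk_reach_all[OF xs(1)]) (use xs step in auto)
      moreover have "last xs = xs ! (length xs - 1)" "length xs - 1 < length xs" using xs(1) by (auto simp: last_conv_nth walk_def)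
      ultimately show ?thesis using xs by metis
    qed
    have "connected_graph V T'" unfolding connected_graph_def
      using all reachable_sym reachable_trans by metis
    moreover have "\<not> connected_graph V T'" using st e unfolding spanning_tree_def T'_def by blast
    ultimately show False by blast
  qed
  have cross: "d a b = d a u + 1 + d v b" if a: "a \<in> A" and b: "b \<in> V - A" for a b
  proof -
    have aV: "a \<in> V" using a unfolding A_def by simp
    have bV: "b \<in> V" using b by simp
    obtain xs where xs: "walk T xs" "hd xs = a" "last xs = b" "length xs = Suc (d a b)"
      using dist_ex[OF reach[OF aV bV]] by blast
    have nn: "xs \<noteq> []" using xs(1) by (simp add: walk_def)
    define P where "P k \<longleftrightarrow> xs ! k \<notin> A" for k
    have Pl: "P (length xs - 1)" using xs(3) b nn unfolding P_def by (simp add: last_conv_nth)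
    have P0: "\<not> P 0" using xs(2) a nn unfolding P_def by (simp add: hd_conv_nth)
    define k where "k = (LEAST k. P k)"
    have Pk: "P k" unfolding k_def using Pl by (rule LeastI)
    have kle: "k \<le> length xs - 1" unfolding k_def using Pl by (rule Least_le)
    have k0: "k \<noteq> 0" using Pk P0 by (cases k) auto
    then obtain i where i: "k = Suc i" by (cases k) auto
    have Pi: "\<not> P i" using not_less_Least[of i P] i unfolding k_def by simp
    have il: "Suc i < length xs" using kle i nn by (cases xs) auto
    have ed: "{xs ! i, xs ! Suc i} \<in> T" using walk_edge[OF xs(1) il] .
    have xiA: "xs ! i \<in> A" using Pi unfolding P_def by simp
    have xsiA: "xs ! Suc i \<notin> A" using Pk i unfolding P_def by simp
    have eq: "{xs ! i, xs ! Suc i} = {u,v}"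
    proof (rule ccontr)
      assume "{xs ! i, xs ! Suc i} \<noteq> {u,v}"
      then have "{xs ! i, xs ! Suc i} \<in> T'" using ed unfolding T'_def by simp
      moreover have "reachable T' u (xs ! i)" using xiA unfolding A_def by simp
      ultimately have "reachable T' u (xs ! Suc i)" using reachable_step by metis
      moreover have "xs ! Suc i \<in> V" using edgeT[OF ed] by simp
      ultimately show False using xsiA unfolding A_def by simp
    qed
    have xi: "xs ! i = u" and xsi: "xs ! Suc i = v"
      using eq xiA xsiA vA uA by (auto simp: doubleton_eq_iff)
    have lt: "last (take (Suc i) xs) = u"
      using take_Suc_conv_app_nth[of i xs] il xi by simp
    have l1: "d a u + 1 \<le> length (take (Suc i) xs)"
      by (rule dist_le) (use xs walk_take lt in auto)
    have l2: "d v b + 1 \<le> length (drop (Suc i) xs)"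
      by (rule dist_le) (use xs walk_drop[OF xs(1) il] xsi il in \<open>auto simp: hd_drop_conv_nth\<close>)
    have "d a u + 1 + d v b \<le> d a b" using l1 l2 il xs(4) by simp
    moreover have "d a b \<le> d a u + 1 + d v b"
    proof -
      have "d a b \<le> d a u + d u b" using d_tri aV uV bV by blast
      moreover have "d u b \<le> d u v + d v b" using d_tri uV vV bV by blast
      ultimately show ?thesis using d_edge[OF e] by simp
    qed
    ultimately show ?thesis by simp
  qed
  have "A \<subseteq> V" unfolding A_def by auto
  then show ?thesis using uA vA cross by blast
qed

lemma adjA:
  assumes "d u v = 1" "u \<in> V" "v \<in> V" "e \<in> V"
  shows "d v e = d u e + 1 \<or> d u e = d v e + 1"
proof -
  have ed: "{u,v} \<in> T" using d_one_edge assms by blast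
  obtain A where A: "A \<subseteq> V" "u \<in> A" "v \<notin> A" "\<forall>a\<in>A. \<forall>b\<in>V-A. d a b = d a u + 1 + d v b"
    using cut[OF ed] by blast
  show ?thesis
  proof (cases "e \<in> A")
    case True
    then have "d e v = d e u + 1 + d v v" using A(3,4) assms(3) by blast
    then show ?thesis using d_sym assms by auto
  next
    case False
    then have "d u e = d u u + 1 + d v e" using A(2,3,4) assms(4) by blast
    then show ?thesis by simp
  qed
qed

lemma adjC:
  assumes "d u v = 1" "u \<in> V" "v \<in> V" "e \<in> V" "w \<in> V"
    and "d v e = d u e + 1" and "d u w = d v w + 1"
  shows "d w e = d w u + d u e"
proof -
  have ed: "{u,v} \<in> T" using d_one_edge assms by blast
  obtain A where A: "A \<subseteq> V" "u \<in> A" "v \<notin> A" "\<forall>a\<in>A. \<forall>b\<in>V-A. d a b = d a u + 1 + d v b"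
    using cut[OF ed] by blast
  have eA: "e \<in> A"
  proof (rule ccontr)
    assume "e \<notin> A"
    then have "d u e = d u u + 1 + d v e" using A(2,3,4) assms(4) by blast
    then show False using assms by simp
  qed
  have wA: "w \<notin> A"
  proof
    assume "w \<in> A"
    then have "d w v = d w u + 1 + d v v" using A(3,4) assms(3) by blast
    then show False using assms d_sym by simp
  qed
  have "d e w = d e u + 1 + d v w" using A(2,3,4) eA wA assms(5) by blast
  then show ?thesis using assms d_sym by simp
qed

lemma fpc:
  assumes "p \<in> V" "q \<in> V" "r \<in> V" "s \<in> V"
  shows "d p q + d r s \<le> max (d p r + d q s) (d p s + d q r)"
  using assms
proof (induction "d p q" arbitrary: p rule: less_induct)
  case less
  show ?case
  proof (cases "p = q")
    case True
    have "d r s \<le> d r p + d p s" using d_tri less.prems by blast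
    then show ?thesis using True d_sym less.prems by simp
  next
    case False
    obtain v where v: "v \<in> V" "d p v = 1" "d p q = d v q + 1" using nbr[OF less.prems(1,2) False] by blast
    have IH: "d v q + d r s \<le> max (d v r + d q s) (d v s + d q r)"
      using less.hyps[of v] v less.prems by simp
    show ?thesis
    proof (cases "d v r = d p r + 1")
      case True
      have "d q r = d q p + d p r" using adjC[OF v(2) less.prems(1) v(1) less.prems(3,2) True v(3)] .
      moreover have "d r s \<le> d r p + d p s" using d_tri less.prems by blast
      ultimately show ?thesis using d_sym less.prems by simp
    next
      case F1: False
      show ?thesis
      proof (cases "d v s = d p s + 1")
        case True
        have "d q s = d q p + d p s" using adjC[OF v(2) less.prems(1) v(1) less.prems(4,2) True v(3)] .
        moreover have "d r s \<le> d r p + d p s" using d_tri less.prems by blast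
        ultimately show ?thesis using d_sym less.prems by simp
      next
        case False
        have "d p r = d v r + 1" using adjA[OF v(2) less.prems(1) v(1) less.prems(3)] F1 by simp
        moreover have "d p s = d v s + 1" using adjA[OF v(2) less.prems(1) v(1) less.prems(4)] False by simp
        ultimately show ?thesis using IH v(3) by simp
      qed
    qed
  qed
qed

end


definition hh :: "('a \<Rightarrow> 'a \<Rightarrow> nat) \<Rightarrow> ('i \<Rightarrow> 'a) \<Rightarrow> ('i \<Rightarrow> 'a) \<Rightarrow> ('i \<Rightarrow> nat) \<Rightarrow> 'i \<Rightarrow> 'a \<Rightarrow> nat"
  where "hh D s t w i x = D x (s i) + D x (t i) + w i"

definition MM :: "('a \<Rightarrow> 'a \<Rightarrow> nat) \<Rightarrow> 'i set \<Rightarrow> ('i \<Rightarrow> 'a) \<Rightarrow> ('i \<Rightarrow> 'a) \<Rightarrow> ('i \<Rightarrow> nat) \<Rightarrow> 'a \<Rightarrow> nat"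
  where "MM D I s t w x = Max ((\<lambda>i. hh D s t w i x) ` I)"

context tree begin

context
  fixes I :: "'i set" and s t :: "'i \<Rightarrow> 'a" and w :: "'i \<Rightarrow> nat"
  assumes finI: "finite I" and neI: "I \<noteq> {}" and sI: "\<And>i. i \<in> I \<Longrightarrow> s i \<in> V"
    and tI: "\<And>i. i \<in> I \<Longrightarrow> t i \<in> V"
begin

abbreviation h where "h \<equiv> hh d s t w"
abbreviation M where "M \<equiv> MM d I s t w"

lemma h_def': "h i x = d x (s i) + d x (t i) + w i" by (simp add: hh_def)

lemma h_le_M: "i \<in> I \<Longrightarrow> h i x \<le> M x"
  unfolding MM_def using finI by (intro Max_ge) auto

lemma M_ex: "\<exists>i\<in>I. h i x = M x"
proof -
  have "M x \<in> (\<lambda>i. h i x) ` I" unfolding MM_def using finI neI by (intro Max_in) auto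
  then show ?thesis by auto
qed

lemma h_lip: "i \<in> I \<Longrightarrow> x \<in> V \<Longrightarrow> y \<in> V \<Longrightarrow> h i x \<le> h i y + 2 * d x y"
proof -
  assume a: "i \<in> I" "x \<in> V" "y \<in> V"
  have "d x (s i) \<le> d x y + d y (s i)" using d_tri a sI by blast
  moreover have "d x (t i) \<le> d x y + d y (t i)" using d_tri a tI by blast
  ultimately show ?thesis unfolding h_def' by simp
qed

lemma M_lip: "x \<in> V \<Longrightarrow> y \<in> V \<Longrightarrow> M x \<le> M y + 2 * d x y"
proof -
  assume a: "x \<in> V" "y \<in> V"
  obtain i where i: "i \<in> I" "h i x = M x" using M_ex by blast
  have "h i x \<le> h i y + 2 * d x y" using h_lip i a by blast
  moreover have "h i y \<le> M y" using h_le_M i by blast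
  ultimately show ?thesis using i by simp
qed

lemma S1:
  assumes "d u v = 1" "u \<in> V" "v \<in> V" "i \<in> I" "h i u < h i v"
  shows "d v (s i) = d u (s i) + 1 \<and> d v (t i) = d u (t i) + 1"
proof -
  have "d v (s i) = d u (s i) + 1 \<or> d u (s i) = d v (s i) + 1" using adjA assms sI by blast
  moreover have "d v (t i) = d u (t i) + 1 \<or> d u (t i) = d v (t i) + 1" using adjA assms tI by blast
  ultimately show ?thesis using assms(5) unfolding h_def' by auto
qed

lemma S2:
  assumes "d u v = 1" "u \<in> V" "v \<in> V" "i \<in> I" "x \<in> V"
    and "d v (s i) = d u (s i) + 1" "d v (t i) = d u (t i) + 1" "d u x = d v x + 1"
  shows "h i x = h i u + 2 * d x u"
proof -
  have "d x (s i) = d x u + d u (s i)" using adjC[OF assms(1,2,3) _ assms(5,6,8)] sI assms by blast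
  moreover have "d x (t i) = d x u + d u (t i)" using adjC[OF assms(1,2,3) _ assms(5,7,8)] tI assms by blast
  ultimately show ?thesis unfolding h_def' by simp
qed

lemma lemS:
  assumes uv: "d u v = 1" "u \<in> V" "v \<in> V" and s0: "s0 \<in> V" "d u s0 = d v s0 + 1"
    and istar: "i \<in> I" "h i v = M v" "h i u < h i v"
    and j: "j \<in> I" "h j s0 = M s0"
  shows "h j v = M v \<and> (h j u < h j v \<longrightarrow> (\<forall>x\<in>V. d u x = d v x + 1 \<longrightarrow> h j x = M x))"
proof -
  have inc: "d v (s i) = d u (s i) + 1 \<and> d v (t i) = d u (t i) + 1" using S1 uv istar by blast
  then have hv: "h i v = h i u + 2" unfolding h_def' by simp
  have "h i s0 = h i u + 2 * d s0 u" using S2 uv istar(1) s0 inc by blast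
  moreover have "d s0 u = d s0 v + 1" using s0 d_sym uv by simp
  ultimately have his: "h i s0 = M v + 2 * d s0 v" using hv istar by simp
  have "M s0 \<le> M v + 2 * d s0 v" using M_lip s0 uv by blast
  moreover have "h i s0 \<le> M s0" using h_le_M istar by blast
  ultimately have Ms: "M s0 = M v + 2 * d s0 v" using his by simp
  have "h j s0 \<le> h j v + 2 * d s0 v" using h_lip j s0 uv by blast
  moreover have "h j v \<le> M v" using h_le_M j by blast
  ultimately have hjv: "h j v = M v" using Ms j by simp
  show ?thesis
  proof (intro conjI impI ballI hjv)
    fix x assume lt: "h j u < h j v" and x: "x \<in> V" "d u x = d v x + 1"
    have incj: "d v (s j) = d u (s j) + 1 \<and> d v (t j) = d u (t j) + 1" using S1 uv j lt by blast
    then have hjv2: "h j v = h j u + 2" unfolding h_def' by simp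
    have "h j x = h j u + 2 * d x u" using S2 uv j(1) x incj by blast
    moreover have "d x u = d x v + 1" using x d_sym uv by simp
    ultimately have "h j x = M v + 2 * d x v" using hjv hjv2 by simp
    moreover have "M x \<le> M v + 2 * d x v" using M_lip x uv by blast
    moreover have "h j x \<le> M x" using h_le_M j by blast
    ultimately show "h j x = M x" by simp
  qed
qed

lemma lemB:
  assumes "c \<in> V" "s0 \<in> V" "x \<in> V" "v \<in> V" "d c v = 1" "d c s0 = d v s0 + 1"
    and "d x s0 < d x c + d c s0"
  shows "d c x = d v x + 1"
proof -
  have "d v x = d c x + 1 \<or> d c x = d v x + 1" using adjA assms by blast
  moreover have False if "d v x = d c x + 1"
  proof -
    have "d s0 x = d s0 c + d c x" using adjC[OF assms(5,1,4,3,2) that assms(6)] .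
    then show False using assms d_sym by simp
  qed
  ultimately show ?thesis by blast
qed


lemma lemK:
  assumes zV: "z \<in> V" and zmin: "\<And>y. y \<in> V \<Longrightarrow> M z \<le> M y"
    and l1: "l1 \<in> I" "h l1 z = M z"
    and wmax: "\<And>i. i \<in> I \<Longrightarrow> h i z = M z \<Longrightarrow> d (s i) (t i) + w i \<le> d (s l1) (t l1) + w l1"
    and ee: "e \<in> V" "e' \<in> V" "\<And>y. h l1 y = d y e + d y e' + w l1" "d e e' = d (s l1) (t l1)"
    and j: "j \<in> I" "h j e = M e"
    and x: "x \<in> V" "d x e < d x z + d z e"
  shows "h l1 x = M x \<or> h j x = M x"
proof (cases "d e e' = d e z + d z e'")
  case True
  have claim: "\<forall>u\<in>V. d u e = n \<longrightarrow> d z u + d u e = d z e \<longrightarrow> M u = M z \<longrightarrow>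
      (\<forall>x\<in>V. d x e < d x u + d u e \<longrightarrow> h l1 x = M x \<or> h j x = M x)" for n
  proof (induction n rule: less_induct)
    case (less n)
    show ?case
    proof (intro ballI impI)
      fix u x assume u: "u \<in> V" "d u e = n" "d z u + d u e = d z e" "M u = M z"
        and x: "x \<in> V" "d x e < d x u + d u e"
      have ue: "u \<noteq> e" using x by auto
      obtain v where v: "v \<in> V" "d u v = 1" "d u e = d v e + 1" using nbr[OF u(1) ee(1) ue] by blast
      have ux: "d u x = d v x + 1" using lemB[OF u(1) ee(1) x(1) v(1,2,3) x(2)] .
      have t1: "d z v \<le> d z u + d u v" using d_tri zV u(1) v(1) by blast
      have t2: "d z e \<le> d z v + d v e" using d_tri zV v(1) ee(1) by blast
      have zv: "d z v + d v e = d z e" using t1 t2 u(3) v(2,3) by simp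
      have zv1: "d z v = d z u + 1" using zv u(3) v(3) by simp
      have Mv: "M z \<le> M v" using zmin v(1) by blast
      show "h l1 x = M x \<or> h j x = M x"
      proof (cases "M z < M v")
        case True
        obtain i where i: "i \<in> I" "h i v = M v" using M_ex by blast
        have "h i u < h i v" using h_le_M[OF i(1), of u] u(4) True i(2) by simp
        then have S: "h j v = M v \<and> (h j u < h j v \<longrightarrow> (\<forall>x\<in>V. d u x = d v x + 1 \<longrightarrow> h j x = M x))"
          using lemS[OF v(2) u(1) v(1) ee(1) v(3) i(1,2) _ j] by blast
        have "h j u < h j v" using S h_le_M[OF j(1), of u] u(4) True by simp
        then show ?thesis using S x(1) ux by blast
      next
        case False
        then have Mv2: "M v = M z" using Mv by simp
        show ?thesis
        proof (cases "d x e < d x v + d v e")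
          case True
          have "d v e < n" using v(3) u(2) by simp
          then show ?thesis using less.IH[of "d v e"] v(1) zv Mv2 x(1) True by blast
        next
          case False
          have "d x e \<le> d x v + d v e" using d_tri x(1) v(1) ee(1) by blast
          then have xv: "d x e = d x v + d v e" using False by simp
          have a1: "d e e' \<le> d e v + d v e'" using d_tri ee v(1) by blast
          have a2: "d v e' \<le> d v z + d z e'" using d_tri ee v(1) zV by blast
          have a3: "d e v = d v e" "d v z = d z v" "d e z = d z e" using d_sym ee v(1) zV by auto
          have ve': "d v e' = d v z + d z e'" and eve: "d e e' = d e v + d v e'"
            using a1 a2 a3 zv True by simp_all
          have hv: "h l1 v = d e e' + w l1" using ee(3)[of v] eve a3 by simp
          have hz: "h l1 z = d e e' + w l1" using ee(3)[of z] True a3 by simp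
          have hvmu: "h l1 v = M z" using hv hz l1 by simp
          have "d u e' \<le> d u z + d z e'" using d_tri u(1) zV ee(2) by blast
          moreover have "d u z = d z u" using d_sym u(1) zV by simp
          moreover have "d v e' = d u e' + 1 \<or> d u e' = d v e' + 1" using adjA v(2) u(1) v(1) ee(2) by blast
          ultimately have ue': "d v e' = d u e' + 1" using ve' a3 zv1 by auto
          have "d x e' = d x u + d u e'" using adjC[OF v(2) u(1) v(1) ee(2) x(1) ue' ux] .
          moreover have "d x u = d x v + 1" using ux d_sym x(1) u(1) v(1) by simp
          ultimately have xe': "d x e' = d x v + d v e'" using ue' by simp
          have "h l1 x = 2 * d x v + h l1 v" using ee(3)[of x] ee(3)[of v] xv xe' a3 by simp
          then have hx: "h l1 x = M z + 2 * d x v" using hvmu by simp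
          have "M x \<le> M v + 2 * d x v" using M_lip x(1) v(1) by blast
          moreover have "h l1 x \<le> M x" using h_le_M l1 by blast
          ultimately show ?thesis using hx Mv2 by simp
        qed
      qed
    qed
  qed
  have "d z z + d z e = d z e" by simp
  then show ?thesis using claim[of "d z e"] zV x by auto
next
  case False
  have ez: "e \<noteq> z" using x by auto
  obtain v where v: "v \<in> V" "d z v = 1" "d z e = d v e + 1" using nbr[OF zV ee(1) ez[symmetric]] by blast
  have zx: "d z x = d v x + 1" using lemB[OF zV ee(1) x(1) v(1,2,3) x(2)] .
  have W1: "d (s l1) (t l1) + w l1 < M z"
  proof -
    have "d e e' < d e z + d z e'" using False d_tri ee zV by (meson le_neq_implies_less)
    moreover have "h l1 z = d z e + d z e' + w l1" using ee(3) by simp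
    moreover have "d e z = d z e" using d_sym ee zV by simp
    ultimately show ?thesis using l1 ee(4) by simp
  qed
  have key: "h i z < h i v" if i: "i \<in> I" "h i v = M v" for i
  proof (rule ccontr)
    assume "\<not> h i z < h i v"
    moreover have "M z \<le> M v" using zmin v(1) by blast
    moreover have "h i z \<le> M z" using h_le_M i by blast
    ultimately have eq: "h i z = M z" "h i v = M z" using i by simp_all
    have A1: "d v (s i) = d z (s i) + 1 \<or> d z (s i) = d v (s i) + 1" using adjA v(2) zV v(1) sI i by blast
    have A2: "d v (t i) = d z (t i) + 1 \<or> d z (t i) = d v (t i) + 1" using adjA v(2) zV v(1) tI i by blast
    have "d (s i) (t i) = d z (s i) + d z (t i)"
    proof (cases "d v (s i) = d z (s i) + 1")
      case True
      then have "d z (t i) = d v (t i) + 1" using A2 eq unfolding h_def' by auto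
      then have "d (t i) (s i) = d (t i) z + d z (s i)" using adjC[OF v(2) zV v(1) sI[OF i(1)] tI[OF i(1)] True] by simp
      then show ?thesis using d_sym sI tI i zV by simp
    next
      case False
      then have s1: "d z (s i) = d v (s i) + 1" using A1 by simp
      then have t1: "d v (t i) = d z (t i) + 1" using A2 eq unfolding h_def' by auto
      have "d (s i) (t i) = d (s i) z + d z (t i)" using adjC[OF v(2) zV v(1) tI[OF i(1)] sI[OF i(1)] t1 s1] .
      then show ?thesis using d_sym sI tI i zV by simp
    qed
    then have "d (s i) (t i) + w i = M z" using eq unfolding h_def' by simp
    then show False using wmax[OF i(1) eq(1)] W1 by simp
  qed
  obtain i where i: "i \<in> I" "h i v = M v" using M_ex by blast
  have S: "h j v = M v \<and> (h j z < h j v \<longrightarrow> (\<forall>x\<in>V. d z x = d v x + 1 \<longrightarrow> h j x = M x))"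
    using lemS[OF v(2) zV v(1) ee(1) v(3) i(1,2) key[OF i] j] by blast
  then have "h j z < h j v" using key j by blast
  then show ?thesis using S x(1) zx by blast
qed


lemma three_paths:
  "\<exists>i1\<in>I. \<exists>i2\<in>I. \<exists>i3\<in>I. \<forall>x\<in>V. h i1 x = M x \<or> h i2 x = M x \<or> h i3 x = M x"
proof -
  have finV: "finite V" using gr unfolding graph_def by blast
  obtain i0 where "i0 \<in> I" using neI by blast
  then have neV: "V \<noteq> {}" using sI by blast
  define m where "m = Min (M ` V)"
  have "m \<in> M ` V" unfolding m_def using finV neV by (intro Min_in) auto
  then obtain z where z: "z \<in> V" "M z = m" by blast
  have zmin: "M z \<le> M y" if yV: "y \<in> V" for y
  proof -
    have "m \<le> M y" unfolding m_def using finV yV by (intro Min_le) auto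
    then show ?thesis using z by simp
  qed
  define Act where "Act = {i\<in>I. h i z = M z}"
  have finA: "finite Act" using finI unfolding Act_def by simp
  have neA: "Act \<noteq> {}" using M_ex[of z] unfolding Act_def by blast
  define Wm where "Wm = Max ((\<lambda>i. d (s i) (t i) + w i) ` Act)"
  have "Wm \<in> (\<lambda>i. d (s i) (t i) + w i) ` Act" unfolding Wm_def using finA neA by (intro Max_in) auto
  then obtain l1 where l1: "l1 \<in> Act" "d (s l1) (t l1) + w l1 = Wm" by blast
  have wmax: "d (s i) (t i) + w i \<le> d (s l1) (t l1) + w l1" if "i \<in> I" "h i z = M z" for i
  proof -
    have "i \<in> Act" using that unfolding Act_def by simp
    then have "d (s i) (t i) + w i \<le> Wm" unfolding Wm_def using finA by (intro Max_ge) auto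
    then show ?thesis using l1(2) by simp
  qed
  have l1I: "l1 \<in> I" and l1z: "h l1 z = M z" using l1 unfolding Act_def by auto
  obtain j2 where j2: "j2 \<in> I" "h j2 (s l1) = M (s l1)" using M_ex by blast
  obtain j3 where j3: "j3 \<in> I" "h j3 (t l1) = M (t l1)" using M_ex by blast
  have sV: "s l1 \<in> V" and tV: "t l1 \<in> V" using sI tI l1I by auto
  have "\<forall>x\<in>V. h l1 x = M x \<or> h j2 x = M x \<or> h j3 x = M x"
  proof
    fix x assume x: "x \<in> V"
    show "h l1 x = M x \<or> h j2 x = M x \<or> h j3 x = M x"
    proof (cases "d x (s l1) < d x z + d z (s l1)")
      case True
      have "h l1 x = M x \<or> h j2 x = M x"
        by (rule lemK[OF z(1) zmin l1I l1z wmax sV tV _ refl j2 x True]) (simp_all add: hh_def)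
      then show ?thesis by blast
    next
      case F1: False
      show ?thesis
      proof (cases "d x (t l1) < d x z + d z (t l1)")
        case True
        have "h l1 x = M x \<or> h j3 x = M x"
          by (rule lemK[OF z(1) zmin l1I l1z wmax tV sV _ _ j3 x True]) (simp_all add: hh_def d_sym sV tV)
        then show ?thesis by blast
      next
        case False
        have "d x (s l1) \<le> d x z + d z (s l1)" using d_tri x z(1) sV by blast
        then have e1: "d x (s l1) = d x z + d z (s l1)" using F1 by simp
        have "d x (t l1) \<le> d x z + d z (t l1)" using d_tri x z(1) tV by blast
        then have e2: "d x (t l1) = d x z + d z (t l1)" using False by simp
        have "h l1 x = h l1 z + 2 * d x z" using e1 e2 unfolding h_def' by simp
        moreover have "M x \<le> M z + 2 * d x z" using M_lip x z(1) by blast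
        moreover have "h l1 x \<le> M x" using h_le_M l1I by blast
        ultimately show ?thesis using l1z by simp
      qed
    qed
  qed
  then show ?thesis using l1I j2(1) j3(1) by blast
qed

end
end


context tree begin

lemma point:
  assumes V: "x \<in> V" "y \<in> V" "a \<in> V" "b \<in> V" "a' \<in> V" "b' \<in> V" "a'' \<in> V" "b'' \<in> V"
    and h1: "d x a'' + d x a + d b'' b \<le> d x a + d x a' + d b b'"
    and h2: "d x a'' + d x a' + d b'' b' \<le> d x a + d x a' + d b b'"
  shows "d x a'' + 1 + d b'' y \<le> d x a + 1 + d b y \<or> d x a'' + 1 + d b'' y \<le> d x a' + 1 + d b' y"
proof -
  have f: "d b'' y + d b b' \<le> max (d b'' b + d y b') (d b'' b' + d y b)" using fpc V by blast
  have s1: "d y b' = d b' y" "d y b = d b y" using d_sym V by auto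
  show ?thesis
  proof (cases "d b'' b + d y b' \<le> d b'' b' + d y b")
    case True
    then have "d b'' y + d b b' \<le> d b'' b' + d y b" using f by simp
    then show ?thesis using h2 s1 by simp
  next
    case False
    then have "d b'' y + d b b' \<le> d b'' b + d y b'" using f by simp
    then show ?thesis using h1 s1 by simp
  qed
qed

end

theorem theorem1:
  fixes V :: "'a set" and E T :: "'a set set" and p q :: 'a
  assumes "graph V E"
    and "two_edge_connected V E"
    and "spanning_tree V E T"
    and "{p, q} \<in> T"
  shows "\<exists>C \<subseteq> swap_edges V E T p q. card C \<le> 6 \<and>
           (\<forall>f \<in> swap_edges V E T p q. \<exists>g \<in> C. critical V E T p q g f)"
proof -
  interpret tree V E T using assms(1,3) by unfold_locales
  define S where "S = swap_edges V E T p q"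
  have SV: "S \<subseteq> V \<times> V" unfolding S_def swap_edges_def side_def by auto
  have finV: "finite V" using assms(1) unfolding graph_def by blast
  have finS: "finite S" using SV finV by (meson finite_SigmaI finite_subset)
  show ?thesis
  proof (cases "S = {}")
    case True
    then show ?thesis unfolding S_def by (intro exI[of _ "{}"]) auto
  next
    case False
    define I where "I = S \<times> S"
    define s :: "('a \<times> 'a) \<times> ('a \<times> 'a) \<Rightarrow> 'a" where "s = (\<lambda>\<pi>. fst (fst \<pi>))"
    define t :: "('a \<times> 'a) \<times> ('a \<times> 'a) \<Rightarrow> 'a" where "t = (\<lambda>\<pi>. fst (snd \<pi>))"
    define w where "w = (\<lambda>\<pi>::('a \<times> 'a) \<times> ('a \<times> 'a). d (snd (fst \<pi>)) (snd (snd \<pi>)))"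
    have finI: "finite I" using finS unfolding I_def by simp
    have neI: "I \<noteq> {}" using False unfolding I_def by simp
    have sI: "\<And>i. i \<in> I \<Longrightarrow> s i \<in> V" unfolding I_def s_def using SV by auto
    have tI: "\<And>i. i \<in> I \<Longrightarrow> t i \<in> V" unfolding I_def t_def using SV by auto
    obtain \<pi>1 \<pi>2 \<pi>3 where pis: "\<pi>1 \<in> I" "\<pi>2 \<in> I" "\<pi>3 \<in> I"
      and cov: "\<forall>x\<in>V. hh d s t w \<pi>1 x = MM d I s t w x \<or> hh d s t w \<pi>2 x = MM d I s t w x
                 \<or> hh d s t w \<pi>3 x = MM d I s t w x"
      using three_paths[of I s t w, OF finI neI sI tI] by blast
    define C where "C = set [fst \<pi>1, snd \<pi>1, fst \<pi>2, snd \<pi>2, fst \<pi>3, snd \<pi>3]"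
    have CS: "C \<subseteq> S" using pis unfolding C_def I_def by auto
    have cardC: "card C \<le> 6" unfolding C_def using card_length[of "[fst \<pi>1, snd \<pi>1, fst \<pi>2, snd \<pi>2, fst \<pi>3, snd \<pi>3]"] by simp
    have crit: "\<exists>g\<in>C. critical V E T p q g f" if fS: "f \<in> S" for f
    proof -
      obtain x y where f: "f = (x,y)" by (cases f)
      have xy: "x \<in> V" "y \<in> V" using SV fS f by auto
      obtain \<pi> where pi: "\<pi> \<in> {\<pi>1,\<pi>2,\<pi>3}" "hh d s t w \<pi> x = MM d I s t w x" using cov xy by blast
      obtain a b a' b' where pie: "\<pi> = ((a,b),(a',b'))" by (metis prod.collapse)
      have gS: "(a,b) \<in> S" "(a',b') \<in> S" using pi pis pie unfolding I_def by auto
      have gC: "(a,b) \<in> C" "(a',b') \<in> C" using pi pie unfolding C_def by auto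
      define F where "F = (\<lambda>(a'', b''). d x a'' + 1 + d b'' y)"
      have Fle: "F k \<le> F (a,b) \<or> F k \<le> F (a',b')" if kS: "k \<in> S" for k
      proof -
        obtain a'' b'' where k: "k = (a'',b'')" by (cases k)
        have "hh d s t w ((a'',b''),(a,b)) x \<le> MM d I s t w x"
          unfolding MM_def using finI kS gS k by (intro Max_ge) (auto simp: I_def)
        then have h1: "d x a'' + d x a + d b'' b \<le> d x a + d x a' + d b b'"
          using pi(2) pie unfolding hh_def s_def t_def w_def by simp
        have "hh d s t w ((a'',b''),(a',b')) x \<le> MM d I s t w x"
          unfolding MM_def using finI kS gS k by (intro Max_ge) (auto simp: I_def)
        then have h2: "d x a'' + d x a' + d b'' b' \<le> d x a + d x a' + d b b'"
          using pi(2) pie unfolding hh_def s_def t_def w_def by simp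
        have V: "a \<in> V" "b \<in> V" "a' \<in> V" "b' \<in> V" "a'' \<in> V" "b'' \<in> V" using gS kS k SV by auto
        show ?thesis using point[OF xy V h1 h2] k unfolding F_def by simp
      qed
      obtain g0 where g0: "g0 \<in> C" "g0 \<in> S" "\<forall>k\<in>S. F k \<le> F g0"
      proof (cases "F (a',b') \<le> F (a,b)")
        case True
        then show ?thesis using that[of "(a,b)"] gS gC Fle by fastforce
      next
        case False
        then show ?thesis using that[of "(a',b')"] gS gC Fle by fastforce
      qed
      have "Max (F ` S) = F g0" using g0 finS by (intro Max_eqI) auto
      then have "critical V E T p q g0 f"
        unfolding critical_def f S_def[symmetric] F_def by (cases g0) simp
      then show ?thesis using g0 by blast
    qed
    show ?thesis using CS cardC crit unfolding S_def by blast
  qed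
qed


end
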